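(* Let $M$ be a smooth manifold of dimension $n$, $\phi$ an exact $1$-form on $M$, and $t\in\mathbb{R}$. On $\mathfrak{h}=\bigoplus_{q=0}^{n}\Lambda^qT^*M$ define, for $\alpha\in\Lambda^aT^*M$ and $\beta\in\Lambda^bT^*M$, $$[\alpha,\beta]_{t,\phi}=(-1)^a d(\alpha\wedge\beta)+\tfrac{a+b+2}{2}\,\alpha\wedge t\phi\wedge\beta .$$ This bracket satisfies super symmetry and the super Jacobi identity, so $(\mathfrak{h},[\cdot,\cdot]_{t,\phi})$ is a Lie superalgebra.
   Context: $\Lambda^qT^*M$ is the space of smooth $q$-forms; a $q$-form has degree $-q-1$. For homogeneous $P,Q,R$ of degrees $p',q',r'$: super symmetry is $[P,Q]=-(-1)^{p'q'}[Q,P]$ and the super Jacobi identity is $[P,[Q,R]]=[[P,Q],R]+(-1)^{p'q'}[Q,[P,R]]$. *)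

theory Defs
  imports Main "HOL-Analysis.Analysis"
begin

text \<open>Abstract model of the graded algebra of smooth differential forms
 \<open>\<Omega>(M) = \<Oplus>_{q=0}^n \<Lambda>^q T^*M\<close> of an n-dimensional smooth manifold M:
 an ambient real vector space 'a (the direct sum), the subspaces \<open>\<Omega> q\<close> of
 homogeneous q-forms, the wedge product and the exterior derivative d.\<close>

definition diff_forms ::
  "(nat \<Rightarrow> 'a::real_vector set) \<Rightarrow> ('a \<Rightarrow> 'a \<Rightarrow> 'a) \<Rightarrow> ('a \<Rightarrow> 'a) \<Rightarrow> nat \<Rightarrow> bool" where
  "diff_forms \<Omega> wedge d n \<longleftrightarrow>
     (\<forall>q. subspace (\<Omega> q)) \<and>
     (\<forall>q>n. \<Omega> q = {0}) \<and>
     (\<forall>x. linear (wedge x)) \<and> (\<forall>y. linear (\<lambda>x. wedge x y)) \<and>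
     (\<forall>p q x y. x \<in> \<Omega> p \<longrightarrow> y \<in> \<Omega> q \<longrightarrow> wedge x y \<in> \<Omega> (p + q)) \<and>
     (\<forall>x y z. wedge (wedge x y) z = wedge x (wedge y z)) \<and>
     (\<forall>p q x y. x \<in> \<Omega> p \<longrightarrow> y \<in> \<Omega> q \<longrightarrow>
        wedge y x = (-1::real) ^ (p * q) *\<^sub>R wedge x y) \<and>
     linear d \<and>
     (\<forall>q x. x \<in> \<Omega> q \<longrightarrow> d x \<in> \<Omega> (Suc q)) \<and>
     (\<forall>x. d (d x) = 0) \<and>
     (\<forall>p x y. x \<in> \<Omega> p \<longrightarrow>
        d (wedge x y) = wedge (d x) y + (-1::real) ^ p *\<^sub>R wedge x (d y))"

definition bracket ::
  "('a::real_vector \<Rightarrow> 'a \<Rightarrow> 'a) \<Rightarrow> ('a \<Rightarrow> 'a) \<Rightarrow> real \<Rightarrow> 'a \<Rightarrow> nat \<Rightarrow> 'a \<Rightarrow> nat \<Rightarrow> 'a \<Rightarrow> 'a" where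
  "bracket wedge d t \<phi> a \<alpha> b \<beta> =
     (-1::real) ^ a *\<^sub>R d (wedge \<alpha> \<beta>)
     + ((real a + real b + 2) / 2) *\<^sub>R wedge \<alpha> (wedge (t *\<^sub>R \<phi>) \<beta>)"

end

theory Submission imports Defs begin

definition LC :: "(nat \<Rightarrow> real) \<Rightarrow> (nat \<Rightarrow> 'a::real_vector) \<Rightarrow> 'a" where
  "LC v m = (\<Sum>j<6. v j *\<^sub>R m j)"

lemma LC_add: "LC u m + LC v m = LC (\<lambda>j. u j + v j) m"
  by (simp add: LC_def sum.distrib scaleR_add_left)
lemma LC_scale: "r *\<^sub>R LC v m = LC (\<lambda>j. r * v j) m"
  by (simp add: LC_def scaleR_sum_right)
lemma LC_neg: "- LC v m = LC (\<lambda>j. - v j) m"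
  by (simp add: LC_def sum_negf)
lemma LC_diff: "LC u m - LC v m = LC (\<lambda>j. u j - v j) m"
  by (simp add: LC_def sum_subtractf scaleR_diff_left)
lemma LC_basis: "k < 6 \<Longrightarrow> m k = LC (\<lambda>j. if j = k then 1 else 0) m"
proof -
  assume k: "k < 6"
  have "LC (\<lambda>j. if j = k then 1 else 0) m = (\<Sum>j<6. if j = k then m j else 0)"
    unfolding LC_def by (rule sum.cong) auto
  also have "\<dots> = m k" using k by (simp add: sum.delta)
  finally show ?thesis by simp
qed
lemma LC_zero: "0 = LC (\<lambda>j. 0) m"
  by (simp add: LC_def)
lemmas LC_rules = LC_add LC_scale LC_neg LC_diff

locale DF =
  fixes Om :: "nat \<Rightarrow> 'a::real_vector set" and w :: "'a \<Rightarrow> 'a \<Rightarrow> 'a" and d :: "'a \<Rightarrow> 'a" and n :: nat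
  assumes F: "diff_forms Om w d n"
begin

lemma wl: "linear (w x)" using F unfolding diff_forms_def by blast
lemma wr: "linear (\<lambda>x. w x y)" using F unfolding diff_forms_def by blast
lemma dl: "linear d" using F unfolding diff_forms_def by blast

lemma wsimps[simp]:
  "w x (y + z) = w x y + w x z" "w (x + y) z = w x z + w y z"
  "w x (r *\<^sub>R y) = r *\<^sub>R w x y" "w (r *\<^sub>R x) y = r *\<^sub>R w x y"
  "w x (- y) = - w x y" "w (- x) y = - w x y"
  "w x 0 = 0" "w 0 y = 0"
  "w x (y - z) = w x y - w x z" "w (x - y) z = w x z - w y z"
  using linear_add[OF wl] linear_add[OF wr[of z]] linear_scale[OF wl] linear_scale[OF wr[of y]]
    linear_neg[OF wl] linear_neg[OF wr[of y]] linear_0[OF wl] linear_0[OF wr[of y]]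
    linear_diff[OF wl] linear_diff[OF wr[of z]]
  by auto

lemma dsimps[simp]:
  "d (x + y) = d x + d y" "d (r *\<^sub>R x) = r *\<^sub>R d x" "d (- x) = - d x" "d 0 = 0"
  "d (x - y) = d x - d y"
  using linear_add[OF dl] linear_scale[OF dl] linear_neg[OF dl] linear_0[OF dl] linear_diff[OF dl]
  by auto

lemma assoc[simp]: "w (w x y) z = w x (w y z)" using F unfolding diff_forms_def by blast
lemma dd[simp]: "d (d x) = 0" using F unfolding diff_forms_def by blast
lemma wdeg: "x \<in> Om p \<Longrightarrow> y \<in> Om q \<Longrightarrow> w x y \<in> Om (p + q)" using F unfolding diff_forms_def by blast
lemma ddeg: "x \<in> Om q \<Longrightarrow> d x \<in> Om (Suc q)" using F unfolding diff_forms_def by blast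
lemma comm: "x \<in> Om p \<Longrightarrow> y \<in> Om q \<Longrightarrow> w y x = (-1::real) ^ (p * q) *\<^sub>R w x y"
  using F unfolding diff_forms_def by blast
lemma leib: "x \<in> Om p \<Longrightarrow> d (w x y) = w (d x) y + (-1::real) ^ p *\<^sub>R w x (d y)"
  using F unfolding diff_forms_def by blast
lemma sub: "subspace (Om q)" using F unfolding diff_forms_def by simp

lemma Pcomm: "P \<in> Om 1 \<Longrightarrow> x \<in> Om p \<Longrightarrow> w x (w P y) = (-1::real) ^ p *\<^sub>R w P (w x y)"
proof -
  assume P: "P \<in> Om 1" and x: "x \<in> Om p"
  have "w x P = (-1::real) ^ (1 * p) *\<^sub>R w P x" using comm[OF P x] by simp
  then have "w (w x P) y = (-1::real) ^ p *\<^sub>R w (w P x) y" by simp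
  then show ?thesis by simp
qed

lemma PP: "P \<in> Om 1 \<Longrightarrow> w P (w P y) = 0"
proof -
  assume P: "P \<in> Om 1"
  have "w P P = (-1::real) ^ (1 * 1) *\<^sub>R w P P" using comm[OF P P] .
  then have h: "(1::real) *\<^sub>R w P P = (-1::real) *\<^sub>R w P P" by simp
  then have "w P P = 0" using scaleR_cancel_right[of "1::real" "w P P" "-1"] by simp
  then have "w (w P P) y = 0" by simp
  then show ?thesis by simp
qed

lemma LHS:
  fixes t :: real and \<phi> A B C :: 'a and a b c :: nat
  defines "P \<equiv> t *\<^sub>R \<phi>"
  assumes P1: "P \<in> Om 1" and dP: "d P = 0"
    and A: "A \<in> Om a" and B: "B \<in> Om b" and C: "C \<in> Om c"
  shows "bracket w d t \<phi> a A (b+c+1) (bracket w d t \<phi> b B c C) =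
     ((-1::real)^a * (-1)^b) *\<^sub>R w (d A) (w (d B) C) + (-1::real)^a *\<^sub>R w (d A) (w B (d C))
   + (- (real b + real c + 2)/2 * (-1)^b) *\<^sub>R w P (w (d A) (w B C))
   + ((real a + 1)/2 * (-1)^a * (-1)^b) *\<^sub>R w P (w A (w (d B) C))
   + ((real a + 1)/2 * (-1)^a) *\<^sub>R w P (w A (w B (d C)))" (is "_ = ?rhs")
proof -
  have dA: "d A \<in> Om (Suc a)" using ddeg[OF A] .
  have dB: "d B \<in> Om (Suc b)" using ddeg[OF B] .
  have dBC: "d (w B C) = w (d B) C + (-1::real)^b *\<^sub>R w B (d C)" using leib[OF B] .
  have dPC: "d (w P C) = - w P (d C)" using leib[OF P1, of C] dP by simp
  have dBPC: "d (w B (w P C)) = w (d B) (w P C) - (-1::real)^b *\<^sub>R w B (w P (d C))"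
    using leib[OF B, of "w P C"] dPC by simp
  define X where "X = bracket w d t \<phi> b B c C"
  have X: "X = (-1::real)^b *\<^sub>R d (w B C) + ((real b + real c + 2)/2) *\<^sub>R w B (w P C)"
    unfolding X_def bracket_def P_def by simp
  have dX: "d X = ((real b + real c + 2)/2) *\<^sub>R d (w B (w P C))" unfolding X by simp
  have br: "bracket w d t \<phi> a A (b+c+1) X = (-1::real)^a *\<^sub>R (w (d A) X + (-1::real)^a *\<^sub>R w A (d X))
     + ((real a + real (b+c+1) + 2)/2) *\<^sub>R w A (w P X)"
    unfolding bracket_def P_def[symmetric] using leib[OF A, of X] by simp
  have c1: "w B (w P C) = (-1::real)^b *\<^sub>R w P (w B C)" using Pcomm[OF P1 B] .
  have c2: "w (d A) (w P Y) = - ((-1::real)^a *\<^sub>R w P (w (d A) Y))" for Y using Pcomm[OF P1 dA] by simp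
  have c3: "w (d B) (w P Y) = - ((-1::real)^b *\<^sub>R w P (w (d B) Y))" for Y using Pcomm[OF P1 dB] by simp
  have c4: "w A (w P Y) = (-1::real)^a *\<^sub>R w P (w A Y)" for Y using Pcomm[OF P1 A] .
  have c5: "w B (w P Y) = (-1::real)^b *\<^sub>R w P (w B Y)" for Y using Pcomm[OF P1 B] .
  have pp: "w P (w P Y) = 0" for Y using PP[OF P1] .
  define mm where "mm = (\<lambda>j::nat. [w (d A) (w (d B) C), w (d A) (w B (d C)), w A (w (d B) (d C)),
     w P (w (d A) (w B C)), w P (w A (w (d B) C)), w P (w A (w B (d C)))] ! j)"
  have m0: "w (d A) (w (d B) C) = LC (\<lambda>j. if j = 0 then 1 else 0) mm" using LC_basis[of 0 mm] by (simp add: mm_def)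
  have m1: "w (d A) (w B (d C)) = LC (\<lambda>j. if j = 1 then 1 else 0) mm" using LC_basis[of 1 mm] by (simp add: mm_def)
  have m2: "w A (w (d B) (d C)) = LC (\<lambda>j. if j = 2 then 1 else 0) mm" using LC_basis[of 2 mm] by (simp add: mm_def)
  have m3: "w P (w (d A) (w B C)) = LC (\<lambda>j. if j = 3 then 1 else 0) mm" using LC_basis[of 3 mm] by (simp add: mm_def)
  have m4: "w P (w A (w (d B) C)) = LC (\<lambda>j. if j = 4 then 1 else 0) mm" using LC_basis[of 4 mm] by (simp add: mm_def)
  have m5: "w P (w A (w B (d C))) = LC (\<lambda>j. if j = 5 then 1 else 0) mm" using LC_basis[of 5 mm] by (simp add: mm_def)
  have "bracket w d t \<phi> a A (b+c+1) (bracket w d t \<phi> b B c C) = bracket w d t \<phi> a A (b+c+1) X"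
    by (simp add: X_def)
  also have "\<dots> = (-1::real)^a *\<^sub>R (w (d A) X + (-1::real)^a *\<^sub>R w A (d X))
     + ((real a + real (b+c+1) + 2)/2) *\<^sub>R w A (w P X)" by (rule br)
  also have "\<dots> = ?rhs" unfolding dX dBPC unfolding X dBC
    apply (simp add: c1 c2 c3 c4 c5 pp)
    apply (simp only: m0 m1 m2 m3 m4 m5 LC_rules)
    apply (rule arg_cong[where f="\<lambda>v. LC v mm"])
    apply (rule ext)
    apply (simp add: field_simps)
    done
  finally show ?thesis .
qed

lemma br_mem:
  fixes t :: real and \<phi> A B :: 'a and a b :: nat
  assumes P1: "t *\<^sub>R \<phi> \<in> Om 1" and A: "A \<in> Om a" and B: "B \<in> Om b"
  shows "bracket w d t \<phi> a A b B \<in> Om (a + b + 1)"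
proof -
  have 1: "d (w A B) \<in> Om (a + b + 1)" using ddeg[OF wdeg[OF A B]] by simp
  have 2: "w A (w (t *\<^sub>R \<phi>) B) \<in> Om (a + b + 1)" using wdeg[OF A wdeg[OF P1 B]]
    by (simp add: add.commute add.left_commute)
  show ?thesis unfolding bracket_def
    by (intro subspace_add[OF sub] subspace_scale[OF sub] 1 2)
qed

lemma RHS1:
  fixes t :: real and \<phi> A B C :: 'a and a b c :: nat
  defines "P \<equiv> t *\<^sub>R \<phi>"
  assumes P1: "P \<in> Om 1" and dP: "d P = 0"
    and A: "A \<in> Om a" and B: "B \<in> Om b" and C: "C \<in> Om c"
  shows "bracket w d t \<phi> (a+b+1) (bracket w d t \<phi> a A b B) c C =
     (-1::real)^a *\<^sub>R w (d A) (w B (d C)) + w A (w (d B) (d C))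
   + (- (real c + 1)/2 * (-1)^b) *\<^sub>R w P (w (d A) (w B C))
   + (- (real c + 1)/2 * (-1)^a * (-1)^b) *\<^sub>R w P (w A (w (d B) C))
   + ((real a + real b + 2)/2 * (-1)^a) *\<^sub>R w P (w A (w B (d C)))" (is "_ = ?rhs")
proof -
  have dA: "d A \<in> Om (Suc a)" using ddeg[OF A] .
  have dB: "d B \<in> Om (Suc b)" using ddeg[OF B] .
  have dAB: "d (w A B) = w (d A) B + (-1::real)^a *\<^sub>R w A (d B)" using leib[OF A] .
  have dPB: "d (w P B) = - w P (d B)" using leib[OF P1, of B] dP by simp
  have dAPB: "d (w A (w P B)) = w (d A) (w P B) - (-1::real)^a *\<^sub>R w A (w P (d B))"
    using leib[OF A, of "w P B"] dPB by simp
  define Y where "Y = bracket w d t \<phi> a A b B"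
  have Ym: "Y \<in> Om (a + b + 1)" unfolding Y_def using br_mem[OF P1[unfolded P_def] A B] .
  have Y: "Y = (-1::real)^a *\<^sub>R d (w A B) + ((real a + real b + 2)/2) *\<^sub>R w A (w P B)"
    unfolding Y_def bracket_def P_def by simp
  have dY: "d Y = ((real a + real b + 2)/2) *\<^sub>R d (w A (w P B))" unfolding Y by simp
  have br: "bracket w d t \<phi> (a+b+1) Y c C = (-1::real)^(a+b+1) *\<^sub>R (w (d Y) C + (-1::real)^(a+b+1) *\<^sub>R w Y (d C))
     + ((real (a+b+1) + real c + 2)/2) *\<^sub>R w Y (w P C)"
    unfolding bracket_def P_def[symmetric] using leib[OF Ym, of C] by simp
  have c2: "w (d A) (w P Z) = - ((-1::real)^a *\<^sub>R w P (w (d A) Z))" for Z using Pcomm[OF P1 dA] by simp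
  have c3: "w (d B) (w P Z) = - ((-1::real)^b *\<^sub>R w P (w (d B) Z))" for Z using Pcomm[OF P1 dB] by simp
  have c4: "w A (w P Z) = (-1::real)^a *\<^sub>R w P (w A Z)" for Z using Pcomm[OF P1 A] .
  have c5: "w B (w P Z) = (-1::real)^b *\<^sub>R w P (w B Z)" for Z using Pcomm[OF P1 B] .
  have pp: "w P (w P Z) = 0" for Z using PP[OF P1] .
  have sq: "(-1::real)^a * (-1)^a = 1" "(-1::real)^b * (-1)^b = 1"
    by (simp_all add: power_add[symmetric])
  define mm where "mm = (\<lambda>j::nat. [w (d A) (w (d B) C), w (d A) (w B (d C)), w A (w (d B) (d C)),
     w P (w (d A) (w B C)), w P (w A (w (d B) C)), w P (w A (w B (d C)))] ! j)"
  have m0: "w (d A) (w (d B) C) = LC (\<lambda>j. if j = 0 then 1 else 0) mm" using LC_basis[of 0 mm] by (simp add: mm_def)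
  have m1: "w (d A) (w B (d C)) = LC (\<lambda>j. if j = 1 then 1 else 0) mm" using LC_basis[of 1 mm] by (simp add: mm_def)
  have m2: "w A (w (d B) (d C)) = LC (\<lambda>j. if j = 2 then 1 else 0) mm" using LC_basis[of 2 mm] by (simp add: mm_def)
  have m3: "w P (w (d A) (w B C)) = LC (\<lambda>j. if j = 3 then 1 else 0) mm" using LC_basis[of 3 mm] by (simp add: mm_def)
  have m4: "w P (w A (w (d B) C)) = LC (\<lambda>j. if j = 4 then 1 else 0) mm" using LC_basis[of 4 mm] by (simp add: mm_def)
  have m5: "w P (w A (w B (d C))) = LC (\<lambda>j. if j = 5 then 1 else 0) mm" using LC_basis[of 5 mm] by (simp add: mm_def)
  have "bracket w d t \<phi> (a+b+1) (bracket w d t \<phi> a A b B) c C = bracket w d t \<phi> (a+b+1) Y c C"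
    by (simp add: Y_def)
  also have "\<dots> = (-1::real)^(a+b+1) *\<^sub>R (w (d Y) C + (-1::real)^(a+b+1) *\<^sub>R w Y (d C))
     + ((real (a+b+1) + real c + 2)/2) *\<^sub>R w Y (w P C)" by (rule br)
  also have "\<dots> = ?rhs" unfolding dY dAPB unfolding Y dAB
    apply (simp add: c2 c3 c4 c5 pp)
    apply (simp only: m0 m1 m2 m3 m4 m5 LC_rules)
    apply (rule arg_cong[where f="\<lambda>v. LC v mm"])
    apply (rule ext)
    apply (cases "even a"; cases "even b"; simp add: field_simps minus_one_power_iff)
    done
  finally show ?thesis .
qed

lemma swap: "x \<in> Om p \<Longrightarrow> y \<in> Om q \<Longrightarrow> w y (w x Z) = (-1::real) ^ (p * q) *\<^sub>R w x (w y Z)"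
proof -
  assume x: "x \<in> Om p" and y: "y \<in> Om q"
  have "w (w y x) Z = (-1::real) ^ (p * q) *\<^sub>R w (w x y) Z" using comm[OF x y] by simp
  then show ?thesis by simp
qed

end

theorem mainTheorem4:
  fixes \<Omega> :: "nat \<Rightarrow> 'a::real_vector set"
    and wedge :: "'a \<Rightarrow> 'a \<Rightarrow> 'a" and d :: "'a \<Rightarrow> 'a"
    and n :: nat and t :: real and f \<phi> \<alpha> \<beta> \<gamma> :: 'a and a b c :: nat
  assumes forms: "diff_forms \<Omega> wedge d n"
    and exact: "f \<in> \<Omega> 0" "\<phi> = d f"
    and homog: "\<alpha> \<in> \<Omega> a" "\<beta> \<in> \<Omega> b" "\<gamma> \<in> \<Omega> c"
  shows "bracket wedge d t \<phi> a \<alpha> b \<beta> \<in> \<Omega> (a + b + 1)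
    \<and> bracket wedge d t \<phi> a \<alpha> b \<beta>
           = - ((-1::real) ^ ((a + 1) * (b + 1)) *\<^sub>R bracket wedge d t \<phi> b \<beta> a \<alpha>)
    \<and> bracket wedge d t \<phi> a \<alpha> (b + c + 1) (bracket wedge d t \<phi> b \<beta> c \<gamma>)
           = bracket wedge d t \<phi> (a + b + 1) (bracket wedge d t \<phi> a \<alpha> b \<beta>) c \<gamma>
             + (-1::real) ^ ((a + 1) * (b + 1)) *\<^sub>R
                 bracket wedge d t \<phi> b \<beta> (a + c + 1) (bracket wedge d t \<phi> a \<alpha> c \<gamma>)"
proof -
  interpret DF \<Omega> wedge d n using forms by (rule DF.intro)
  define P where "P = t *\<^sub>R \<phi>"
  have P1: "P \<in> \<Omega> 1" unfolding P_def exact(2)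
    using subspace_scale[OF sub ddeg[OF exact(1)]] by simp
  have dP: "d P = 0" unfolding P_def exact(2) by simp
  note A = homog(1) and B = homog(2) and C = homog(3)
  have dA: "d \<alpha> \<in> \<Omega> (Suc a)" using ddeg[OF A] .
  have dB: "d \<beta> \<in> \<Omega> (Suc b)" using ddeg[OF B] .
  have dC: "d \<gamma> \<in> \<Omega> (Suc c)" using ddeg[OF C] .
  have mem: "bracket wedge d t \<phi> a \<alpha> b \<beta> \<in> \<Omega> (a + b + 1)"
    using br_mem[OF P1[unfolded P_def] A B] .
  have sym: "bracket wedge d t \<phi> a \<alpha> b \<beta>
           = - ((-1::real) ^ ((a + 1) * (b + 1)) *\<^sub>R bracket wedge d t \<phi> b \<beta> a \<alpha>)"
  proof -
    have s1: "wedge \<beta> \<alpha> = (-1::real) ^ (a * b) *\<^sub>R wedge \<alpha> \<beta>" using comm[OF A B] .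
    have s2: "wedge \<beta> (wedge P \<alpha>) = ((-1::real) ^ b * (-1) ^ (a * b)) *\<^sub>R wedge P (wedge \<alpha> \<beta>)"
      using Pcomm[OF P1 B, of \<alpha>] s1 by simp
    have s3: "wedge \<alpha> (wedge P \<beta>) = (-1::real) ^ a *\<^sub>R wedge P (wedge \<alpha> \<beta>)"
      using Pcomm[OF P1 A] .
    define mm where "mm = (\<lambda>j::nat. [d (wedge \<alpha> \<beta>), wedge P (wedge \<alpha> \<beta>), 0, 0, 0, 0] ! j)"
    have m0: "d (wedge \<alpha> \<beta>) = LC (\<lambda>j. if j = 0 then 1 else 0) mm" using LC_basis[of 0 mm] by (simp add: mm_def)
    have m1: "wedge P (wedge \<alpha> \<beta>) = LC (\<lambda>j. if j = 1 then 1 else 0) mm" using LC_basis[of 1 mm] by (simp add: mm_def)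
    show ?thesis unfolding bracket_def P_def[symmetric]
      apply (simp add: s1 s2 s3)
      apply (simp only: m0 m1 LC_rules)
      apply (rule arg_cong[where f="\<lambda>v. LC v mm"])
      apply (rule ext)
      apply (cases "even a"; cases "even b"; simp add: field_simps minus_one_power_iff)
      done
  qed
  note L1 = LHS[OF P1[unfolded P_def] dP[unfolded P_def] A B C, folded P_def]
  note L2 = LHS[OF P1[unfolded P_def] dP[unfolded P_def] B A C, folded P_def]
  note R1 = RHS1[OF P1[unfolded P_def] dP[unfolded P_def] A B C, folded P_def]
  have r1: "wedge (d \<beta>) (wedge (d \<alpha>) \<gamma>) = (-1::real) ^ (Suc a * Suc b) *\<^sub>R wedge (d \<alpha>) (wedge (d \<beta>) \<gamma>)"
    using swap[OF dA dB] .
  have r2: "wedge (d \<beta>) (wedge \<alpha> (d \<gamma>)) = (-1::real) ^ (a * Suc b) *\<^sub>R wedge \<alpha> (wedge (d \<beta>) (d \<gamma>))"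
    using swap[OF A dB] .
  have r3: "wedge P (wedge (d \<beta>) (wedge \<alpha> \<gamma>)) = (-1::real) ^ (a * Suc b) *\<^sub>R wedge P (wedge \<alpha> (wedge (d \<beta>) \<gamma>))"
    using swap[OF A dB] by simp
  have r4: "wedge P (wedge \<beta> (wedge (d \<alpha>) \<gamma>)) = (-1::real) ^ (Suc a * b) *\<^sub>R wedge P (wedge (d \<alpha>) (wedge \<beta> \<gamma>))"
    using swap[OF dA B] by simp
  have r5: "wedge P (wedge \<beta> (wedge \<alpha> (d \<gamma>))) = (-1::real) ^ (a * b) *\<^sub>R wedge P (wedge \<alpha> (wedge \<beta> (d \<gamma>)))"
    using swap[OF A B] by simp
  define mm where "mm = (\<lambda>j::nat. [wedge (d \<alpha>) (wedge (d \<beta>) \<gamma>), wedge (d \<alpha>) (wedge \<beta> (d \<gamma>)), wedge \<alpha> (wedge (d \<beta>) (d \<gamma>)),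
     wedge P (wedge (d \<alpha>) (wedge \<beta> \<gamma>)), wedge P (wedge \<alpha> (wedge (d \<beta>) \<gamma>)), wedge P (wedge \<alpha> (wedge \<beta> (d \<gamma>)))] ! j)"
  have m0: "wedge (d \<alpha>) (wedge (d \<beta>) \<gamma>) = LC (\<lambda>j. if j = 0 then 1 else 0) mm" using LC_basis[of 0 mm] by (simp add: mm_def)
  have m1: "wedge (d \<alpha>) (wedge \<beta> (d \<gamma>)) = LC (\<lambda>j. if j = 1 then 1 else 0) mm" using LC_basis[of 1 mm] by (simp add: mm_def)
  have m2: "wedge \<alpha> (wedge (d \<beta>) (d \<gamma>)) = LC (\<lambda>j. if j = 2 then 1 else 0) mm" using LC_basis[of 2 mm] by (simp add: mm_def)
  have m3: "wedge P (wedge (d \<alpha>) (wedge \<beta> \<gamma>)) = LC (\<lambda>j. if j = 3 then 1 else 0) mm" using LC_basis[of 3 mm] by (simp add: mm_def)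
  have m4: "wedge P (wedge \<alpha> (wedge (d \<beta>) \<gamma>)) = LC (\<lambda>j. if j = 4 then 1 else 0) mm" using LC_basis[of 4 mm] by (simp add: mm_def)
  have m5: "wedge P (wedge \<alpha> (wedge \<beta> (d \<gamma>))) = LC (\<lambda>j. if j = 5 then 1 else 0) mm" using LC_basis[of 5 mm] by (simp add: mm_def)
  have jac: "bracket wedge d t \<phi> a \<alpha> (b + c + 1) (bracket wedge d t \<phi> b \<beta> c \<gamma>)
           = bracket wedge d t \<phi> (a + b + 1) (bracket wedge d t \<phi> a \<alpha> b \<beta>) c \<gamma>
             + (-1::real) ^ ((a + 1) * (b + 1)) *\<^sub>R
                 bracket wedge d t \<phi> b \<beta> (a + c + 1) (bracket wedge d t \<phi> a \<alpha> c \<gamma>)"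
    unfolding L1 L2 R1
    apply (simp only: r1 r2 r3 r4 r5 scaleR_add_right scaleR_scaleR)
    apply (simp only: m0 m1 m2 m3 m4 m5 LC_rules)
    apply (rule arg_cong[where f="\<lambda>v. LC v mm"])
    apply (rule ext)
    apply (cases "even a"; cases "even b"; simp add: field_simps minus_one_power_iff)
    done
  show ?thesis using mem sym jac by blast
qed

end
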